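(* Let $n\ge2$ and $\Gamma_n=\langle c,\mu\mid c^n\mu^{-3}c^n\mu^{-1}=1\rangle$ (the fundamental group of the 3-manifold $M_n$ obtained by gluing the exterior of the $(2,2n)$-torus link to the orientable $I$-bundle over the Klein bottle). Embed $X(\Gamma_n,\mathrm{SL}_2(\mathbb C))_{\mathrm{red}}$ in $\mathbb C^3$ via the coordinates $(t_c,t_\mu,t_{c\mu})$, and for $k=1,\dots,n-1$ let $$Y_k=\{(t_c,t_\mu,t_{c\mu})\in\mathbb C^3\mid t_\mu=0,\ t_c=2\cos(\pi k/n)\}.$$ Then each $Y_k$ is contained in $X(\Gamma_n,\mathrm{SL}_2(\mathbb C))_{\mathrm{red}}$ and is an irreducible component of it containing characters of simple representations.
   Context: $X(\Gamma,\mathrm{SL}_2(\mathbb C))_{\mathrm{red}}$ is the $\mathrm{SL}_2(\mathbb C)$-character variety (reduced character scheme) of $\Gamma$; $t_\gamma$ is the trace function of $\gamma$, and for a two-generated group the functions $t_c,t_\mu,t_{c\mu}$ generate the coordinate ring. A representation $\rho$ is simple if $\rho(\Gamma)$ spans $M_2(\mathbb C)$ linearly. *)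

theory Defs
  imports "HOL-Analysis.Analysis"
begin

type_synonym cmat = "complex^2^2"
type_synonym pt3 = "complex \<times> complex \<times> complex"

fun mpow :: "cmat \<Rightarrow> nat \<Rightarrow> cmat" where
  "mpow A 0 = mat 1"
| "mpow A (Suc m) = A ** mpow A m"

text \<open>Representations of Gamma_n = < c, mu | c^n mu^-3 c^n mu^-1 = 1 > into SL_2(C),
  given by the images A = rho(c), B = rho(mu).\<close>
definition is_rep :: "nat \<Rightarrow> cmat \<Rightarrow> cmat \<Rightarrow> bool" where
  "is_rep n A B \<longleftrightarrow> det A = 1 \<and> det B = 1 \<and>
     mpow A n ** mpow (matrix_inv B) 3 ** mpow A n ** matrix_inv B = mat 1"

inductive_set gen_group :: "cmat \<Rightarrow> cmat \<Rightarrow> cmat set" for A B where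
  one: "mat 1 \<in> gen_group A B"
| genA: "A \<in> gen_group A B"
| genB: "B \<in> gen_group A B"
| invA: "matrix_inv A \<in> gen_group A B"
| invB: "matrix_inv B \<in> gen_group A B"
| mult: "g \<in> gen_group A B \<Longrightarrow> h \<in> gen_group A B \<Longrightarrow> g ** h \<in> gen_group A B"

definition csmult :: "complex \<Rightarrow> cmat \<Rightarrow> cmat" where
  "csmult c M = (\<chi> i j. c * M $ i $ j)"

text \<open>rho is simple iff rho(Gamma) spans M_2(C) as a complex vector space.\<close>
definition simple_rep :: "cmat \<Rightarrow> cmat \<Rightarrow> bool" where
  "simple_rep A B \<longleftrightarrow> (\<forall>M :: cmat. \<exists>S c. finite S \<and> S \<subseteq> gen_group A B \<and>
       M = (\<Sum>g\<in>S. csmult (c g) g))"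

definition char_pt :: "cmat \<Rightarrow> cmat \<Rightarrow> pt3" where
  "char_pt A B = (trace A, trace B, trace (A ** B))"

text \<open>The (reduced) character variety, as a point set in C^3.\<close>
definition charvar :: "nat \<Rightarrow> pt3 set" where
  "charvar n = {char_pt A B | A B. is_rep n A B}"

inductive_set poly3 :: "(pt3 \<Rightarrow> complex) set" where
  const: "(\<lambda>_. a) \<in> poly3"
| px: "(\<lambda>(x,y,z). x) \<in> poly3"
| py: "(\<lambda>(x,y,z). y) \<in> poly3"
| pz: "(\<lambda>(x,y,z). z) \<in> poly3"
| add: "f \<in> poly3 \<Longrightarrow> g \<in> poly3 \<Longrightarrow> (\<lambda>p. f p + g p) \<in> poly3"
| mul: "f \<in> poly3 \<Longrightarrow> g \<in> poly3 \<Longrightarrow> (\<lambda>p. f p * g p) \<in> poly3"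

definition zariski_closed :: "pt3 set \<Rightarrow> bool" where
  "zariski_closed S \<longleftrightarrow> (\<exists>F \<subseteq> poly3. S = {p. \<forall>f\<in>F. f p = 0})"

definition zariski_irreducible :: "pt3 set \<Rightarrow> bool" where
  "zariski_irreducible Z \<longleftrightarrow> Z \<noteq> {} \<and>
     (\<forall>C1 C2. zariski_closed C1 \<and> zariski_closed C2 \<and> Z \<subseteq> C1 \<union> C2 \<longrightarrow> Z \<subseteq> C1 \<or> Z \<subseteq> C2)"

definition irreducible_component :: "pt3 set \<Rightarrow> pt3 set \<Rightarrow> bool" where
  "irreducible_component X Z \<longleftrightarrow> Z \<subseteq> X \<and> zariski_irreducible Z \<and>
     (\<forall>W. zariski_irreducible W \<and> Z \<subseteq> W \<and> W \<subseteq> X \<longrightarrow> W = Z)"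

definition Yk :: "nat \<Rightarrow> nat \<Rightarrow> pt3 set" where
  "Yk n k = {(tc, tm, tcm). tm = 0 \<and> tc = complex_of_real (2 * cos (pi * real k / real n))}"

end

theory Submission
  imports Defs "HOL-Computational_Algebra.Polynomial"
begin

definition mk :: "complex \<Rightarrow> complex \<Rightarrow> complex \<Rightarrow> complex \<Rightarrow> cmat" where
  "mk a b c d = (\<chi> i j. if i = 1 then (if j = 1 then a else b) else (if j = 1 then c else d))"

lemma mk_nth[simp]: "mk a b c d $ 1 $ 1 = a" "mk a b c d $ 1 $ 2 = b"
  "mk a b c d $ 2 $ 1 = c" "mk a b c d $ 2 $ 2 = d"
  by (simp_all add: mk_def)

lemma mk_eta: "M = mk (M$1$1) (M$1$2) (M$2$1) (M$2$2)"
  unfolding mk_def vec_eq_iff forall_2 by simp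

lemma mk_eq[simp]: "mk a b c d = mk a' b' c' d' \<longleftrightarrow> a = a' \<and> b = b' \<and> c = c' \<and> d = d'"
  by (metis mk_nth)

lemma mk_mult[simp]: "mk a b c d ** mk e f g h = mk (a*e+b*g) (a*f+b*h) (c*e+d*g) (c*f+d*h)"
  unfolding matrix_matrix_mult_def vec_eq_iff forall_2 by (simp add: sum_2 mk_def)

lemma mk_det[simp]: "det (mk a b c d) = a*d - b*c"
  by (simp add: det_2)

lemma mk_trace[simp]: "trace (mk a b c d) = a + d"
  by (simp add: trace_def sum_2)

lemma mat1_mk: "mat 1 = mk 1 0 0 1"
  unfolding mk_def vec_eq_iff forall_2 by (simp add: mat_def)

lemma mk_add[simp]: "mk a b c d + mk e f g h = mk (a+e) (b+f) (c+g) (d+h)"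
  unfolding mk_def vec_eq_iff forall_2 by simp

lemma mk_csmult[simp]: "csmult s (mk a b c d) = mk (s*a) (s*b) (s*c) (s*d)"
  unfolding mk_def csmult_def vec_eq_iff forall_2 by simp

lemma mk_zero: "0 = mk 0 0 0 0"
  unfolding mk_def vec_eq_iff forall_2 by simp

lemma inv_mk: assumes "a*d - b*c = 1" shows "matrix_inv (mk a b c d) = mk d (-b) (-c) a"
proof -
  let ?M = "mk a b c d" and ?N = "mk d (-b) (-c) a"
  have 1: "?M ** ?N = mat 1" "?N ** ?M = mat 1" using assms
    by (simp_all add: mat1_mk algebra_simps)
  have "?M ** matrix_inv ?M = mat 1 \<and> matrix_inv ?M ** ?M = mat 1"
    unfolding matrix_inv_def by (rule someI[of _ ?N]) (use 1 in auto)
  then have "matrix_inv ?M = matrix_inv ?M ** (?M ** ?N)" using 1 by simp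
  also have "\<dots> = ?N" using \<open>_ \<and> _\<close> by (simp add: matrix_mul_assoc del: mk_mult)
  finally show ?thesis .
qed

lemma fricke:
  fixes a1 a2 a3 a4 b1 b2 b3 b4 :: complex
  assumes "a1*a4 - a2*a3 = 1" "b1*b4-b2*b3 = 1"
   "a1*b1+a2*b3 = b1*a1+b2*a3" "a1*b2+a2*b4 = b1*a2+b2*a4" "a3*b1+a4*b3 = b3*a1+b4*a3" "a3*b2+a4*b4 = b3*a2+b4*a4"
  shows "(a1+a4)^2 + (b1+b4)^2 + (a1*b1+a2*b3+a3*b2+a4*b4)^2 - (a1+a4)*(b1+b4)*(a1*b1+a2*b3+a3*b2+a4*b4) - 4 = 0"
  using assms by algebra

lemma sub2:
  fixes p q x1 x2 x3 x4 b1 b2 b3 b4 :: complex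
  assumes "x1*x4 - x2*x3 = 1" "b1*(-b1)-b2*b3 = 1"
   "(p+q*x1)*(p+q*x4) - q*x2*q*x3 = 1"
   "(x1*b1+x2*b3)*x1 + (x1*b2+x2*(-b1))*x3 = b1"
   "(x1*b1+x2*b3)*x2 + (x1*b2+x2*(-b1))*x4 = b2"
   "(x3*b1+x4*b3)*x1 + (x3*b2+x4*(-b1))*x3 = b3"
   "(x3*b1+x4*b3)*x2 + (x3*b2+x4*(-b1))*x4 = -b1"
  shows "((p+q*x1)*b1+q*x2*b3+q*x3*b2+(p+q*x4)*(-b1))^2 = 0"
  using assms by algebra


definition kappa :: "pt3 \<Rightarrow> complex" where
  "kappa p = (case p of (x,y,z) \<Rightarrow> x^2 + y^2 + z^2 - x*y*z - 4)"

lemma centralizer: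
  fixes a1 a2 a3 a4 x1 x2 x3 x4 :: complex
  assumes "a1*x1+a2*x3 = x1*a1+x2*a3" "a1*x2+a2*x4 = x1*a2+x2*a4" "a3*x1+a4*x3 = x3*a1+x4*a3"
    "\<not> (x2 = 0 \<and> x3 = 0 \<and> x1 = x4)"
  shows "\<exists>p q. a1 = p+q*x1 \<and> a2 = q*x2 \<and> a3 = q*x3 \<and> a4 = p + q*x4"
proof -
  have e1: "a2*x3 = x2*a3" and e2: "x2*(a1-a4) = a2*(x1-x4)" and e3: "a3*(x1-x4) = x3*(a1-a4)"
    using assms by algebra+
  consider "x2 \<noteq> 0" | "x2 = 0" "x3 \<noteq> 0" | "x2 = 0" "x3 = 0" "x1 \<noteq> x4" using assms(4) by blast
  then show ?thesis
  proof cases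
    case 1
    define q where "q = a2/x2"
    have "a3 = q*x3" using e1 1 by (simp add: q_def field_simps)
    moreover have "a4 = (a1 - q*x1) + q*x4" using e2 1 by (simp add: q_def field_simps; simp add: algebra_simps)
    ultimately show ?thesis using 1 by (intro exI[of _ "a1 - q*x1"] exI[of _ q]) (simp add: q_def)
  next
    case 2
    define q where "q = a3/x3"
    have "a2 = q*x2" using e1 2 by (simp add: q_def field_simps)
    moreover have "a4 = (a1 - q*x1) + q*x4" using e3 2 by (simp add: q_def field_simps; simp add: algebra_simps)
    ultimately show ?thesis using 2 by (intro exI[of _ "a1 - q*x1"] exI[of _ q]) (simp add: q_def)
  next
    case 3
    define q where "q = (a1-a4)/(x1-x4)"
    have d: "x1 - x4 \<noteq> 0" using 3 by simp
    have h2: "a2 = 0" using e2 3 by simp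
    have h3: "a3 = 0" using e3 3 by simp
    have "q*(x1-x4) = a1-a4" using d by (simp add: q_def)
    then have h4: "a4 = (a1 - q*x1) + q*x4" by (simp add: algebra_simps)
    show ?thesis using 3 h2 h3 h4 by (intro exI[of _ "a1 - q*x1"] exI[of _ q]) simp
  qed
qed



lemma mpow3: "mpow M 3 = M ** (M ** M)"
  by (simp add: numeral_3_eq_3 matrix_mul_rid)

lemma core:
  fixes A B X :: cmat
  assumes dA: "det A = 1" and dB: "det B = 1" and dX: "det X = 1" and cm: "A ** X = X ** A"
    and rel: "X ** mpow (matrix_inv B) 3 ** X ** matrix_inv B = mat 1"
  shows "kappa (char_pt A B) = 0 \<or> (trace B = 0 \<and> trace (A**B) = 0) \<or>
         (trace B = 0 \<and> (X = mat 1 \<or> X = mk (-1) 0 0 (-1)))"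
proof -
  obtain a1 a2 a3 a4 where hA: "A = mk a1 a2 a3 a4" using mk_eta by blast
  obtain b1 b2 b3 b4 where hB: "B = mk b1 b2 b3 b4" using mk_eta by blast
  obtain x1 x2 x3 x4 where hX: "X = mk x1 x2 x3 x4" using mk_eta by blast
  have da: "a1*a4 - a2*a3 = 1" using dA hA by simp
  have db: "b1*b4 - b2*b3 = 1" using dB hB by simp
  have dx: "x1*x4 - x2*x3 = 1" using dX hX by simp
  define \<beta> where "\<beta> = mk b4 (-b2) (-b3) b1"
  have hb: "matrix_inv B = \<beta>" unfolding hB \<beta>_def by (rule inv_mk[OF db])
  have bB: "\<beta> ** B = mat 1" unfolding \<beta>_def hB mat1_mk using db by (simp add: algebra_simps)
  define W where "W = X ** (\<beta> ** (\<beta> ** \<beta>))"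
  have r1: "W ** X ** \<beta> = mat 1" using rel unfolding hb W_def mpow3 .
  have WX: "W ** X = B"
  proof -
    have "W ** X = (W ** X) ** (\<beta> ** B)" using bB by (simp add: matrix_mul_rid)
    also have "\<dots> = (W ** X ** \<beta>) ** B" by (simp add: matrix_mul_assoc)
    also have "\<dots> = B" using r1 by (simp add: matrix_mul_lid)
    finally show ?thesis .
  qed
  have WW: "W ** W = \<beta> ** \<beta>"
  proof -
    have "W ** W = (W ** X) ** (\<beta> ** (\<beta> ** \<beta>))" by (simp add: W_def matrix_mul_assoc)
    also have "\<dots> = (B ** \<beta>) ** (\<beta> ** \<beta>)" using WX by (simp add: matrix_mul_assoc)
    also have "B ** \<beta> = mat 1" unfolding \<beta>_def hB mat1_mk using db by (simp add: algebra_simps)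
    finally show ?thesis by (simp add: matrix_mul_lid)
  qed
  have dbe: "det \<beta> = 1" unfolding \<beta>_def using db by (simp add: algebra_simps)
  have dW: "det W = 1" unfolding W_def by (simp only: det_mul dX dbe) simp
  obtain w1 w2 w3 w4 where hW: "W = mk w1 w2 w3 w4" using mk_eta by blast
  have dw: "w1*w4 - w2*w3 = 1" using dW hW by simp
  have we: "w1*w1+w2*w3 = b4*b4+b2*b3" "w1*w2+w2*w4 = -(b4*b2)-b2*b1"
     "w3*w1+w4*w3 = -(b3*b4)-b1*b3" "w3*w2+w4*w4 = b3*b2+b1*b1"
    using WW unfolding hW \<beta>_def by simp_all
  have cme: "a1*x1+a2*x3 = x1*a1+x2*a3" "a1*x2+a2*x4 = x1*a2+x2*a4" "a3*x1+a4*x3 = x3*a1+x4*a3"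
     "a3*x2+a4*x4 = x3*a2+x4*a4"
    using cm unfolding hA hX by simp_all
  have kap: "kappa (char_pt A B) = (a1+a4)^2 + (b1+b4)^2 + (a1*b1+a2*b3+a3*b2+a4*b4)^2
      - (a1+a4)*(b1+b4)*(a1*b1+a2*b3+a3*b2+a4*b4) - 4"
    unfolding kappa_def char_pt_def hA hB by (simp add: add.assoc)
  have trAB: "trace (A**B) = a1*b1+a2*b3+a3*b2+a4*b4" unfolding hA hB by simp
  have trB: "trace B = b1 + b4" unfolding hB by simp
  show ?thesis
  proof (cases "b1 + b4 = 0")
    case False
    define tw where "tw = w1 + w4"
    define tb where "tb = b1 + b4"
    have tb0: "tb \<noteq> 0" using False tb_def by simp
    have lin: "tw*w1 = tb*b4" "tw*w2 = -(tb*b2)" "tw*w3 = -(tb*b3)" "tw*w4 = tb*b1"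
      unfolding tw_def tb_def using we dw db by algebra+
    have tw0: "tw \<noteq> 0"
    proof
      assume "tw = 0"
      then have "b1 = 0" "b2 = 0" "b3 = 0" "b4 = 0" using lin tb0 by simp_all
      then show False using db by simp
    qed
    define s where "s = tb / tw"
    have s0: "s \<noteq> 0" using tb0 tw0 s_def by simp
    have ws: "w1 = s*b4" "w2 = -(s*b2)" "w3 = -(s*b3)" "w4 = s*b1"
      using lin tw0 unfolding s_def by (simp_all add: field_simps)
    have XW: "X = W ** (B ** (B ** B))"
    proof -
      have "(\<beta> ** (\<beta> ** \<beta>)) ** (B ** (B ** B)) = mat 1"
        unfolding \<beta>_def hB mat1_mk using db by simp algebra
      then have "X = X ** ((\<beta> ** (\<beta> ** \<beta>)) ** (B ** (B ** B)))" by (simp add: matrix_mul_rid)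
      then show ?thesis unfolding W_def by (simp add: matrix_mul_assoc)
    qed
    have xs: "x1 = s*(b1*b1+b2*b3)" "x2 = s*(b1*b2+b2*b4)" "x3 = s*(b3*b1+b4*b3)" "x4 = s*(b3*b2+b4*b4)"
    proof -
      have "mk x1 x2 x3 x4 = mk w1 w2 w3 w4 ** (mk b1 b2 b3 b4 ** (mk b1 b2 b3 b4 ** mk b1 b2 b3 b4))"
        using XW unfolding hX hW hB .
      then have e: "x1 = w1 * (b1 * (b1 * b1 + b2 * b3) + b2 * (b3 * b1 + b4 * b3)) + w2 * (b3 * (b1 * b1 + b2 * b3) + b4 * (b3 * b1 + b4 * b3))"
         "x2 = w1 * (b1 * (b1 * b2 + b2 * b4) + b2 * (b3 * b2 + b4 * b4)) + w2 * (b3 * (b1 * b2 + b2 * b4) + b4 * (b3 * b2 + b4 * b4))"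
         "x3 = w3 * (b1 * (b1 * b1 + b2 * b3) + b2 * (b3 * b1 + b4 * b3)) + w4 * (b3 * (b1 * b1 + b2 * b3) + b4 * (b3 * b1 + b4 * b3))"
         "x4 = w3 * (b1 * (b1 * b2 + b2 * b4) + b2 * (b3 * b2 + b4 * b4)) + w4 * (b3 * (b1 * b2 + b2 * b4) + b4 * (b3 * b2 + b4 * b4))"
        unfolding mk_mult mk_eq by simp_all
      show "x1 = s*(b1*b1+b2*b3)" "x2 = s*(b1*b2+b2*b4)" "x3 = s*(b3*b1+b4*b3)" "x4 = s*(b3*b2+b4*b4)"
        unfolding e ws using db by algebra+
    qed
    have comm: "a1*b1+a2*b3 = b1*a1+b2*a3" "a1*b2+a2*b4 = b1*a2+b2*a4" "a3*b1+a4*b3 = b3*a1+b4*a3" "a3*b2+a4*b4 = b3*a2+b4*a4"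
      using cme s0 tb0 db unfolding xs tb_def by algebra+
    have "kappa (char_pt A B) = 0" unfolding kap using fricke[OF da db comm] .
    then show ?thesis by simp
  next
    case True
    then have b4: "b4 = -b1" by (simp add: add_eq_0_iff2)
    have "\<beta> ** (\<beta> ** \<beta>) = B" unfolding \<beta>_def hB b4 using db[unfolded b4] by simp algebra
    then have XBX: "X ** B ** X = B" using WX unfolding W_def by simp
    have xb: "(x1*b1+x2*b3)*x1 + (x1*b2+x2*(-b1))*x3 = b1"
       "(x1*b1+x2*b3)*x2 + (x1*b2+x2*(-b1))*x4 = b2"
       "(x3*b1+x4*b3)*x1 + (x3*b2+x4*(-b1))*x3 = b3"
       "(x3*b1+x4*b3)*x2 + (x3*b2+x4*(-b1))*x4 = -b1"
      using XBX unfolding hX hB b4 by simp_all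
    show ?thesis
    proof (cases "x2 = 0 \<and> x3 = 0 \<and> x1 = x4")
      case True
      then have "x1*x1 = 1" using dx by simp
      then have "x1 = 1 \<or> x1 = -1" by algebra
      then have "X = mat 1 \<or> X = mk (-1) 0 0 (-1)" using True unfolding hX mat1_mk by auto
      then show ?thesis using trB b4 by simp
    next
      case False
      obtain p q where pq: "a1 = p+q*x1" "a2 = q*x2" "a3 = q*x3" "a4 = p + q*x4"
        using centralizer[OF cme(1-3) False] by blast
      have "(a1*b1+a2*b3+a3*b2+a4*(-b1))^2 = 0"
      proof -
        have "(p+q*x1)*(p+q*x4) - q*x2*q*x3 = 1" using da unfolding pq by (simp add: ac_simps)
        from sub2[OF dx db[unfolded b4] this xb] show ?thesis unfolding pq .
      qed
      then have "trace (A**B) = 0" using trAB b4 by simp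
      then show ?thesis using trB b4 by simp
    qed
  qed
qed


lemma mpow_comm: "A ** mpow A m = mpow A m ** A"
  by (induction m) (simp_all add: matrix_mul_lid matrix_mul_rid matrix_mul_assoc)

lemma det_mpow: "det A = 1 \<Longrightarrow> det (mpow A m) = 1"
  by (induction m) (simp_all add: det_mul det_I)

lemma eigen_pow:
  assumes "A ** mk v1 0 v2 0 = mk (l* v1) 0 (l* v2) 0"
  shows "mpow A m ** mk v1 0 v2 0 = mk (l^m* v1) 0 (l^m* v2) 0"
proof (induction m)
  case 0 then show ?case by (simp add: matrix_mul_lid)
next
  case (Suc m)
  obtain a b c d where hA: "A = mk a b c d" using mk_eta by blast
  have "mpow A (Suc m) ** mk v1 0 v2 0 = A ** (mpow A m ** mk v1 0 v2 0)"
    by (simp add: matrix_mul_assoc)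
  also have "\<dots> = mk (l^m * (l * v1)) 0 (l^m*(l * v2)) 0"
  proof -
    have e: "a * v1 + b * v2 = l * v1" "c * v1 + d * v2 = l * v2" using assms unfolding hA by simp_all
    have "a * (l^m * v1) + b * (l^m * v2) = l^m * (a * v1 + b * v2)"
         "c * (l^m * v1) + d * (l^m * v2) = l^m * (c * v1 + d * v2)" by algebra+
    then show ?thesis unfolding Suc.IH unfolding hA using e by simp
  qed
  finally show ?case by (simp add: algebra_simps)
qed

lemma eigen_exists:
  fixes a b c d l :: complex
  assumes "a*d - b*c = 1" "l*l - (a+d)*l + 1 = 0"
  shows "\<exists>v1 v2. (v1 \<noteq> 0 \<or> v2 \<noteq> 0) \<and> mk a b c d ** mk v1 0 v2 0 = mk (l* v1) 0 (l* v2) 0"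
proof -
  consider "b \<noteq> 0 \<or> l \<noteq> a" | "b = 0" "l = a" "l \<noteq> d \<or> c \<noteq> 0" | "b = 0" "l = a" "l = d" "c = 0" by blast
  then show ?thesis
  proof cases
    case 1
    show ?thesis
      apply (rule exI[of _ b], rule exI[of _ "l - a"])
      using 1 assms by (simp; algebra)
  next
    case 2
    show ?thesis
      apply (rule exI[of _ "l - d"], rule exI[of _ c])
      using 2 by (simp add: right_diff_distrib)
  next
    case 3
    show ?thesis
      apply (rule exI[of _ 1], rule exI[of _ 0])
      using 3 by simp
  qed
qed

lemma pow_scalar_trace:
  fixes A :: cmat
  assumes dA: "det A = 1" and n: "n \<ge> 1"
    and X: "mpow A n = mat 1 \<or> mpow A n = mk (-1) 0 0 (-1)"
  shows "\<exists>j\<le>n. trace A = complex_of_real (2 * cos (pi * real j / real n))"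
proof -
  obtain a b c d where hA: "A = mk a b c d" using mk_eta by blast
  have da: "a*d - b*c = 1" using dA hA by simp
  define t where "t = a + d"
  define l where "l = (t + csqrt (t^2 - 4)) / 2"
  have lq: "l*l - t*l + 1 = 0" unfolding l_def by (simp add: field_simps power2_eq_square[symmetric]; algebra)
  have l0: "l \<noteq> 0" using lq by auto
  have tl: "t = l + 1/l" using lq l0 by (simp add: field_simps)
  obtain v1 v2 where v: "v1 \<noteq> 0 \<or> v2 \<noteq> 0" and ev: "A ** mk v1 0 v2 0 = mk (l* v1) 0 (l* v2) 0"
    using eigen_exists[OF da lq[unfolded t_def]] hA by blast
  have pv: "mpow A n ** mk v1 0 v2 0 = mk (l^n* v1) 0 (l^n* v2) 0" by (rule eigen_pow[OF ev])
  have "l^n = 1 \<or> l^n = -1"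
    using X
  proof
    assume "mpow A n = mat 1"
    then have "v1 = l^n* v1" "v2 = l^n* v2" using pv by (simp_all add: matrix_mul_lid)
    then show ?thesis using v by (metis mult_cancel_right1)
  next
    assume "mpow A n = mk (-1) 0 0 (-1)"
    then have "-v1 = l^n* v1" "-v2 = l^n* v2" using pv by simp_all
    then have "l^n = -1" using v by (metis mult_minus_left mult_cancel_right1 mult_cancel_right)
    then show ?thesis by simp
  qed
  moreover have "l^(2*n) = (l^n)^2" by (simp add: power_mult[symmetric] mult.commute)
  ultimately have "l^(2*n) = 1" by auto
  then have "l \<in> {z::complex. z^(2*n) = 1}" by simp
  then obtain j where j: "j < 2*n" and lj: "l = exp(2 * of_real pi * \<i> * of_nat j / of_nat (2*n))"
    using complex_roots_unity[of "2*n"] n by auto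
  define th where "th = pi * real j / real n"
  have lth: "l = exp (\<i> * of_real th)" unfolding lj th_def using n by (simp add: field_simps)
  have "t = exp (\<i> * of_real th) + exp (-(\<i> * of_real th))" unfolding tl lth by (simp add: exp_minus field_simps)
  also have "\<dots> = 2 * cos (of_real th)" by (simp add: cos_exp_eq)
  also have "\<dots> = complex_of_real (2 * cos th)" by (simp add: cos_of_real)
  finally have tt: "t = complex_of_real (2 * cos th)" .
  show ?thesis
  proof (cases "j \<le> n")
    case True then show ?thesis using tt hA t_def th_def by auto
  next
    case False
    define j' where "j' = 2*n - j"
    have "j' \<le> n" using False j j'_def by simp
    moreover have "cos th = cos (pi * real j' / real n)"
    proof -
      have rj: "real j' = 2 * real n - real j" unfolding j'_def using j by (simp add: of_nat_diff)
      have "pi * real j' / real n = 2*pi - th" unfolding rj th_def using n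
        by (simp add: field_simps)
      then show ?thesis by (simp add: cos_diff)
    qed
    ultimately show ?thesis using tt hA t_def by auto
  qed
qed


lemma mpow_diag: "mpow (mk l 0 0 m) j = mk (l^j) 0 0 (m^j)"
  by (induction j) (simp_all add: mat1_mk)

lemma cis_facts:
  fixes n k :: nat
  assumes "n \<ge> 2" "1 \<le> k" "k \<le> n - 1"
  defines "th \<equiv> pi * real k / real n"
  shows "cis th \<noteq> cis (-th)" "cis th * cis (-th) = 1"
    "cis th + cis (-th) = complex_of_real (2 * cos th)"
    "cis th ^ n = (-1)^k" "cis (-th) ^ n = (-1)^k"
proof -
  have "0 < th" unfolding th_def using assms by simp
  moreover have "th < pi" unfolding th_def using assms by (simp add: field_simps)
  ultimately have "sin th > 0" by (rule sin_gt_zero)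
  then show "cis th \<noteq> cis (-th)" by (auto simp: complex_eq_iff)
  show "cis th * cis (-th) = 1" by (simp add: cis_mult)
  show "cis th + cis (-th) = complex_of_real (2 * cos th)" by (simp add: complex_eq_iff)
  have nth: "real n * th = real k * pi" unfolding th_def using assms by simp
  have ck: "cis (real k * pi) = (-1)^k" by (simp add: cis.ctr complex_eq_iff cos_npi sin_npi)
  have ck': "cis (-(real k * pi)) = (-1)^k" by (simp add: cis.ctr complex_eq_iff cos_npi sin_npi)
  show "cis th ^ n = (-1)^k" using Complex.DeMoivre[of th n] nth ck by simp
  have nth': "real n * (-th) = -(real k * pi)" using nth by simp
  show "cis (-th) ^ n = (-1)^k" using Complex.DeMoivre[of "-th" n] nth' ck' by simp
qed



lemma rep_at:
  fixes n k :: nat and z :: complex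
  assumes "n \<ge> 2" "1 \<le> k" "k \<le> n - 1"
  defines "th \<equiv> pi * real k / real n"
  defines "A \<equiv> mk (cis th) 0 0 (cis (-th))"
  defines "al \<equiv> z / (cis th - cis (-th))"
  defines "B \<equiv> mk al 1 (-(1+al^2)) (-al)"
  shows "is_rep n A B \<and> char_pt A B = (complex_of_real (2 * cos th), 0, z)"
proof -
  note cf = cis_facts[OF assms(1-3), folded th_def]
  define l where "l = cis th"
  define m where "m = cis (-th)"
  define s :: complex where "s = (-1)^k"
  have ss: "s * s = 1" unfolding s_def by (simp flip: power_add power_mult_distrib)
  have lm: "l * m = 1" "l \<noteq> m" using cf unfolding l_def m_def by simp_all
  have dA: "det A = 1" unfolding A_def using lm by (simp add: l_def m_def)
  have dB: "al * (-al) - 1 * (-(1+al^2)) = 1" by (simp add: power2_eq_square)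
  have iB: "matrix_inv B = mk (-al) (-1) (1+al^2) al" unfolding B_def using inv_mk[OF dB] by simp
  have pA: "mpow A n = mk s 0 0 s" unfolding A_def mpow_diag using cf by (simp add: s_def)
  have rel: "mpow A n ** mpow (matrix_inv B) 3 ** mpow A n ** matrix_inv B = mat 1"
    unfolding pA iB mpow3 mat1_mk mk_mult mk_eq apply (intro conjI) using ss by algebra+
  have "is_rep n A B" unfolding is_rep_def using dA dB rel by (simp add: B_def)
  moreover have "trace (A ** B) = z"
  proof -
    have "trace (A ** B) = al * (l - m)" unfolding A_def B_def l_def m_def by (simp add: algebra_simps)
    also have "\<dots> = z" unfolding al_def l_def m_def using cf by simp
    finally show ?thesis .
  qed
  moreover have "trace A = complex_of_real (2 * cos th)" unfolding A_def using cf by simp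
  moreover have "trace B = 0" unfolding B_def by simp
  ultimately show ?thesis unfolding char_pt_def by simp
qed



lemma simple_diag:
  fixes l m :: complex
  assumes lm: "l * m = 1" "l \<noteq> m"
  shows "simple_rep (mk l 0 0 m) (mk 0 1 (-1) 0)"
  unfolding simple_rep_def
proof
  fix M :: cmat
  obtain m1 m2 m3 m4 where hM: "M = mk m1 m2 m3 m4" using mk_eta by blast
  let ?I = "mk 1 0 0 1" and ?A = "mk l 0 0 m" and ?B = "mk 0 1 (-1) 0" and ?C = "mk 0 l (-m) 0"
  have d: "l - m \<noteq> 0" using lm by simp
  define b0 where "b0 = (m1 - m4) / (l - m)"
  define a0 where "a0 = m1 - b0 * l"
  define dd where "dd = (m2 + m3) / (l - m)"
  define g where "g = m2 - dd * l"
  define c where "c = (\<lambda>X. if X = ?I then a0 else if X = ?A then b0 else if X = ?B then g else dd)"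
  have l1: "l \<noteq> 1" using lm by auto
  have ne: "?I \<noteq> ?A" "?I \<noteq> ?B" "?I \<noteq> ?C" "?A \<noteq> ?B" "?A \<noteq> ?C" "?B \<noteq> ?C"
    using l1 lm by auto
  have sub: "{?I, ?A, ?B, ?C} \<subseteq> gen_group ?A ?B"
  proof -
    have "?A ** ?B = ?C" by simp
    moreover have "?A ** ?B \<in> gen_group ?A ?B" by (rule gen_group.mult[OF gen_group.genA gen_group.genB])
    ultimately have "?C \<in> gen_group ?A ?B" by simp
    moreover have "?I \<in> gen_group ?A ?B" using gen_group.one[of ?A ?B] by (simp add: mat1_mk)
    ultimately show ?thesis using gen_group.genA gen_group.genB by auto
  qed
  have sm: "(\<Sum>X\<in>{?I, ?A, ?B, ?C}. csmult (c X) X) = csmult a0 ?I + (csmult b0 ?A + (csmult g ?B + csmult dd ?C))"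
  proof -
    have cv: "c ?I = a0" "c ?A = b0" "c ?B = g" "c ?C = dd" using ne ne[THEN not_sym] unfolding c_def by (simp_all only: if_True if_False simp_thms)
    have n1: "?I \<notin> {?A, ?B, ?C}" "?A \<notin> {?B, ?C}" "?B \<notin> {?C}" using ne by (simp_all only: insert_iff empty_iff simp_thms)
    show ?thesis by (simp only: n1 sum.empty finite.insertI finite.emptyI cv sum.insert_if empty_iff if_False add_0_right)
  qed
  have e1: "m1 = a0 + b0 * l" unfolding a0_def by simp
  have e4: "m4 = a0 + b0 * m"
  proof -
    have "b0 * (l - m) = m1 - m4" unfolding b0_def using d by simp
    then show ?thesis unfolding a0_def by (simp add: algebra_simps)
  qed
  have e2: "m2 = g + dd * l" unfolding g_def by simp
  have e3: "m3 = - g - dd * m"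
  proof -
    have "dd * (l - m) = m2 + m3" unfolding dd_def using d by simp
    then show ?thesis unfolding g_def by (simp add: algebra_simps)
  qed
  have eq: "M = (\<Sum>X\<in>{?I, ?A, ?B, ?C}. csmult (c X) X)"
    unfolding sm hM using e1 e2 e3 e4 by simp
  have fin: "finite {?I, ?A, ?B, ?C}" by simp
  show "\<exists>S c. finite S \<and> S \<subseteq> gen_group ?A ?B \<and> M = (\<Sum>g\<in>S. csmult (c g) g)"
    by (rule exI[of _ "{?I, ?A, ?B, ?C}"], rule exI[of _ c]) (simp only: fin sub eq simp_thms)
qed



lemma poly3_x: "(\<lambda>p. fst p) \<in> poly3"
  using poly3.px by (simp add: case_prod_unfold)
lemma poly3_y: "(\<lambda>p. fst (snd p)) \<in> poly3"
  using poly3.py by (simp add: case_prod_unfold)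
lemma poly3_z: "(\<lambda>p. snd (snd p)) \<in> poly3"
  using poly3.pz by (simp add: case_prod_unfold)
lemma poly3_diff: "f \<in> poly3 \<Longrightarrow> g \<in> poly3 \<Longrightarrow> (\<lambda>p. f p - g p) \<in> poly3"
proof -
  assume "f \<in> poly3" "g \<in> poly3"
  then have "(\<lambda>p. f p + (\<lambda>_. -1) p * g p) \<in> poly3" by (intro poly3.add poly3.mul poly3.const)
  then show ?thesis by simp
qed
lemma poly3_prod: "finite S \<Longrightarrow> (\<lambda>p. \<Prod>s\<in>S. (fst p - s)) \<in> poly3"
proof (induction S rule: finite_induct)
  case empty then show ?case using poly3.const[of 1] by simp
next
  case (insert s S)
  have "(\<lambda>p. (fst p - s) * (\<Prod>s\<in>S. (fst p - s))) \<in> poly3"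
    using insert by (intro poly3.mul poly3_diff poly3_x poly3.const)
  then show ?case using insert by simp
qed

lemma poly3_line: "f \<in> poly3 \<Longrightarrow> \<exists>q. \<forall>z. f (x0, y0, z) = poly q z"
proof (induction rule: poly3.induct)
  case (const a) then show ?case by (intro exI[of _ "[:a:]"]) simp
next
  case px then show ?case by (intro exI[of _ "[:x0:]"]) simp
next
  case py then show ?case by (intro exI[of _ "[:y0:]"]) simp
next
  case pz then show ?case by (intro exI[of _ "[:0, 1:]"]) simp
next
  case (add f g)
  then obtain q1 q2 where "\<forall>z. f (x0, y0, z) = poly q1 z" "\<forall>z. g (x0, y0, z) = poly q2 z" by blast
  then show ?case by (intro exI[of _ "q1 + q2"]) simp
next
  case (mul f g)
  then obtain q1 q2 where "\<forall>z. f (x0, y0, z) = poly q1 z" "\<forall>z. g (x0, y0, z) = poly q2 z" by blast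
  then show ?case by (intro exI[of _ "q1 * q2"]) simp
qed

lemma line_closed_part:
  assumes "zariski_closed C" "\<not> (\<forall>z. (x0, y0, z) \<in> C)"
  shows "finite {z. (x0, y0, z) \<in> C}"
proof -
  obtain F where F: "F \<subseteq> poly3" "C = {p. \<forall>f\<in>F. f p = 0}" using assms(1) zariski_closed_def by blast
  obtain z1 where "(x0, y0, z1) \<notin> C" using assms(2) by blast
  then obtain f where f: "f \<in> F" "f (x0, y0, z1) \<noteq> 0" using F by blast
  obtain q where q: "\<forall>z. f (x0, y0, z) = poly q z" using poly3_line f F by blast
  have "q \<noteq> 0" using f q by (metis poly_0)
  then have "finite {z. poly q z = 0}" by (rule poly_roots_finite)
  moreover have "{z. (x0, y0, z) \<in> C} \<subseteq> {z. poly q z = 0}" using F f q by auto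
  ultimately show ?thesis by (rule finite_subset[rotated])
qed

lemma line_irreducible: "zariski_irreducible {p. fst p = x0 \<and> fst (snd p) = y0}"
  unfolding zariski_irreducible_def
proof (intro conjI allI impI)
  show "{p. fst p = x0 \<and> fst (snd p) = y0} \<noteq> {}" by auto
  fix C1 C2
  assume h: "zariski_closed C1 \<and> zariski_closed C2 \<and> {p. fst p = x0 \<and> fst (snd p) = y0} \<subseteq> C1 \<union> C2"
  show "{p. fst p = x0 \<and> fst (snd p) = y0} \<subseteq> C1 \<or> {p. fst p = x0 \<and> fst (snd p) = y0} \<subseteq> C2"
  proof (rule ccontr)
    assume "\<not> ?thesis"
    then have n1: "\<not> (\<forall>z. (x0, y0, z) \<in> C1)" and n2: "\<not> (\<forall>z. (x0, y0, z) \<in> C2)" by auto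
    have "finite ({z. (x0, y0, z) \<in> C1} \<union> {z. (x0, y0, z) \<in> C2})"
      using line_closed_part[OF _ n1] line_closed_part[OF _ n2] h by simp
    moreover have "{z. (x0, y0, z) \<in> C1} \<union> {z. (x0, y0, z) \<in> C2} = UNIV"
    proof -
      have "\<And>z. (x0, y0, z) \<in> C1 \<union> C2"
      proof -
        fix z :: complex
        have "(x0, y0, z) \<in> {p. fst p = x0 \<and> fst (snd p) = y0}" by simp
        then show "(x0, y0, z) \<in> C1 \<union> C2" using h by blast
      qed
      then show ?thesis by auto
    qed
    ultimately show False using infinite_UNIV_char_0 by metis
  qed
qed



lemma closed_union2:
  "zariski_closed {p. f p = 0 \<and> g p = 0}" if "f \<in> poly3" "g \<in> poly3"
proof -
  have "{p. f p = 0 \<and> g p = 0} = {p. \<forall>h\<in>{f, g}. h p = 0}" by auto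
  then show ?thesis unfolding zariski_closed_def using that by blast
qed

lemma kappa_poly: "kappa \<in> poly3"
proof -
  have "(\<lambda>p. fst p * fst p + fst (snd p) * fst (snd p) + snd (snd p) * snd (snd p)
          - fst p * fst (snd p) * snd (snd p) - (\<lambda>_. 4) p) \<in> poly3"
    by (intro poly3_diff poly3.add poly3.mul poly3_x poly3_y poly3_z poly3.const)
  moreover have "(\<lambda>p. fst p * fst p + fst (snd p) * fst (snd p) + snd (snd p) * snd (snd p)
          - fst p * fst (snd p) * snd (snd p) - (\<lambda>_. 4) p) = kappa"
    by (rule ext) (simp add: kappa_def case_prod_unfold power2_eq_square)
  ultimately show ?thesis by simp
qed

theorem mainTheorem15:
  fixes n k :: nat
  assumes "n \<ge> 2" and "1 \<le> k" and "k \<le> n - 1"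
  shows "Yk n k \<subseteq> charvar n \<and> irreducible_component (charvar n) (Yk n k) \<and>
         (\<exists>A B. is_rep n A B \<and> simple_rep A B \<and> char_pt A B \<in> Yk n k)"
proof -
  define th where "th = pi * real k / real n"
  define c0 where "c0 = complex_of_real (2 * cos th)"
  have Ydef: "Yk n k = {p. fst p = c0 \<and> fst (snd p) = 0}"
    unfolding Yk_def c0_def th_def by auto
  note cf = cis_facts[OF assms, folded th_def]
  have sub: "Yk n k \<subseteq> charvar n"
  proof
    fix p assume "p \<in> Yk n k"
    then obtain z where p: "p = (c0, 0, z)" unfolding Ydef by (cases p) auto
    show "p \<in> charvar n" using rep_at[OF assms, of z, folded th_def]
      unfolding charvar_def p c0_def mem_Collect_eq by metis
  qed
  have irr: "zariski_irreducible (Yk n k)" unfolding Ydef by (rule line_irreducible)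
  define S where "S = (\<lambda>j. complex_of_real (2 * cos (pi * real j / real n))) ` {..n} - {c0}"
  have finS: "finite S" unfolding S_def by simp
  define P where "P = (\<lambda>p::pt3. \<Prod>s\<in>S. (fst p - s))"
  define C2 where "C2 = {p. kappa p * fst (snd p) = 0 \<and> kappa p * snd (snd p) * P p = 0}"
  have C2c: "zariski_closed C2" unfolding C2_def P_def
    by (intro closed_union2 poly3.mul kappa_poly poly3_y poly3_z poly3_prod finS)
  have Yc: "zariski_closed (Yk n k)" unfolding Ydef
  proof -
    have "(\<lambda>p. fst p - (\<lambda>_. c0) p) \<in> poly3" by (intro poly3_diff poly3_x poly3.const)
    from closed_union2[OF this poly3_y] show "zariski_closed {p. fst p = c0 \<and> fst (snd p) = 0}" by simp
  qed
  have cover: "charvar n \<subseteq> Yk n k \<union> C2"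
  proof
    fix p assume "p \<in> charvar n"
    then obtain A B where AB: "is_rep n A B" "p = char_pt A B" unfolding charvar_def by blast
    have dA: "det A = 1" and dB: "det B = 1" and rel: "mpow A n ** mpow (matrix_inv B) 3 ** mpow A n ** matrix_inv B = mat 1"
      using AB(1) unfolding is_rep_def by auto
    have cases: "kappa (char_pt A B) = 0 \<or> (trace B = 0 \<and> trace (A**B) = 0) \<or>
         (trace B = 0 \<and> (mpow A n = mat 1 \<or> mpow A n = mk (-1) 0 0 (-1)))"
      by (rule core[OF dA dB det_mpow[OF dA] mpow_comm rel])
    have pp: "fst p = trace A" "fst (snd p) = trace B" "snd (snd p) = trace (A**B)"
      unfolding AB(2) char_pt_def by simp_all
    show "p \<in> Yk n k \<union> C2"
    proof -
      consider "kappa p = 0" | "fst (snd p) = 0" "snd (snd p) = 0"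
        | "fst (snd p) = 0" "mpow A n = mat 1 \<or> mpow A n = mk (-1) 0 0 (-1)"
        using cases pp AB(2) by auto
      then show ?thesis
      proof cases
        case 1 then show ?thesis unfolding C2_def by simp
      next
        case 2 then show ?thesis unfolding C2_def by simp
      next
        case 3
        obtain j where j: "j \<le> n" "trace A = complex_of_real (2 * cos (pi * real j / real n))"
          using pow_scalar_trace[OF dA _ 3(2)] assms(1) by auto
        show ?thesis
        proof (cases "fst p = c0")
          case True then show ?thesis unfolding Ydef using 3 by simp
        next
          case False
          then have "fst p \<in> S" unfolding S_def using j pp by auto
          then have "P p = 0" unfolding P_def using finS by (auto intro: prod_zero)
          then show ?thesis unfolding C2_def using 3 by simp
        qed
      qed
    qed
  qed
  have notC2: "(c0, 0, 3) \<notin> C2"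
  proof
    assume "(c0, 0, 3) \<in> C2"
    then have h: "kappa (c0, 0, 3) * 3 * P (c0, 0, 3) = 0" unfolding C2_def by simp
    have "kappa (c0, 0, 3) = complex_of_real ((2 * cos th)^2 + 5)"
      unfolding kappa_def c0_def by (simp add: power2_eq_square)
    moreover have "(2 * cos th)^2 + 5 \<noteq> 0" by (smt (verit) zero_le_power2)
    ultimately have k0: "kappa (c0, 0, 3) \<noteq> 0" by (simp only: of_real_eq_0_iff) simp
    have "P (c0, 0, 3) \<noteq> 0" unfolding P_def using finS by (simp add: S_def)
    then show False using h k0 by simp
  qed
  have inY: "(c0, 0, 3) \<in> Yk n k" unfolding Ydef by simp
  have comp: "irreducible_component (charvar n) (Yk n k)"
    unfolding irreducible_component_def
  proof (intro conjI sub irr allI impI)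
    fix W assume W: "zariski_irreducible W \<and> Yk n k \<subseteq> W \<and> W \<subseteq> charvar n"
    then have "W \<subseteq> Yk n k \<union> C2" using cover by blast
    then have "W \<subseteq> Yk n k \<or> W \<subseteq> C2" using W Yc C2c unfolding zariski_irreducible_def by blast
    then show "W = Yk n k" using W inY notC2 by blast
  qed
  have simp: "\<exists>A B. is_rep n A B \<and> simple_rep A B \<and> char_pt A B \<in> Yk n k"
  proof -
    have r: "is_rep n (mk (cis th) 0 0 (cis (-th))) (mk 0 1 (-1) 0) \<and>
        char_pt (mk (cis th) 0 0 (cis (-th))) (mk 0 1 (-1) 0) = (c0, 0, 0)"
      using rep_at[OF assms, of 0, folded th_def] by (simp add: c0_def)
    have "simple_rep (mk (cis th) 0 0 (cis (-th))) (mk 0 1 (-1) 0)"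
      using simple_diag cf by simp
    moreover have "(c0, 0, 0) \<in> Yk n k" unfolding Ydef by simp
    ultimately show ?thesis using r by metis
  qed
  show ?thesis using sub comp simp by blast
qed

end
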